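(* Let $\mathbf{A} \in \mathbb{R}^{L \times N}$, $\mathbf{L}_2 \in \mathbb{R}^{M_2 \times N}$ and $\lambda_2 > 0$. Assume: (i) $\mathbf{A}$ has full row rank, so that $\mathbf{A}\mathbf{A}^T$ is invertible; (ii) $\ker \mathbf{A} \cap \ker \mathbf{L}_2 = \{\mathbf{0}\}$; (iii) $\ker(\mathbf{A})^\perp$ is an invariant subspace of $\mathbf{L}_2^T\mathbf{L}_2$, i.e. $\mathbf{x} \in \ker(\mathbf{A})^\perp \Rightarrow \mathbf{L}_2^T\mathbf{L}_2\mathbf{x} \in \ker(\mathbf{A})^\perp$. Let $\mathbf{\Lambda}_2 = (\mathbf{A}\mathbf{A}^T)^{-1}\mathbf{A}\mathbf{L}_2^T\mathbf{L}_2\mathbf{A}^T$. Then $$(\mathbf{A}^T\mathbf{A} + \lambda_2\mathbf{L}_2^T\mathbf{L}_2)^{-1}\mathbf{A}^T = \mathbf{A}^T(\mathbf{A}\mathbf{A}^T + \lambda_2\mathbf{\Lambda}_2)^{-1},$$ where both inverses appearing in this identity exist.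
   Context: $\ker(\mathbf{A})^\perp$ denotes the orthogonal complement of the nullspace of $\mathbf{A}$ in $\mathbb{R}^N$. *)

theory Defs
  imports "HOL-Analysis.Analysis"
begin

end

theory Submission
  imports Defs
begin

lemma inv_props:
  fixes A :: "real^'n^'n"
  assumes "invertible A"
  shows "A ** matrix_inv A = mat 1" "matrix_inv A ** A = mat 1"
proof -
  have "\<exists>A'. A ** A' = mat 1 \<and> A' ** A = mat 1" using assms invertible_def by blast
  hence "A ** matrix_inv A = mat 1 \<and> matrix_inv A ** A = mat 1"
    unfolding matrix_inv_def by (rule someI_ex)
  thus "A ** matrix_inv A = mat 1" "matrix_inv A ** A = mat 1" by auto
qed

lemma ker_invertible:
  fixes A :: "real^'n^'n"
  assumes "\<And>x. A *v x = 0 \<Longrightarrow> x = 0"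
  shows "invertible A"
  using assms invertible_left_inverse matrix_left_invertible_ker by blast

lemma inner_transp:
  fixes A :: "real^'n^'m"
  shows "inner (transpose A *v y) x = inner y (A *v x)"
  by (simp add: dot_lmul_matrix)

lemma add_rdistrib_mat:
  fixes A B :: "real^'n^'m" and C :: "real^'p^'n"
  shows "(A + B) ** C = A ** C + B ** C"
  by (simp add: matrix_eq matrix_vector_mul_assoc[symmetric] matrix_vector_mult_add_rdistrib)

theorem lemma1:
  fixes A :: "real^'n^'l" and L2 :: "real^'n^'m" and lam2 :: real
  assumes lam_pos: "lam2 > 0"
    and full_row_rank: "rank A = CARD('l)"
    and ker_int: "{x. A *v x = 0} \<inter> {x. L2 *v x = 0} = {0}"
    and invariant: "\<And>x. x \<in> orthogonal_comp {x. A *v x = 0} \<Longrightarrow>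
        (transpose L2 ** L2) *v x \<in> orthogonal_comp {x. A *v x = 0}"
  shows "let Lam2 = matrix_inv (A ** transpose A) ** A ** transpose L2 ** L2 ** transpose A
         in invertible (transpose A ** A + lam2 *\<^sub>R (transpose L2 ** L2))
          \<and> invertible (A ** transpose A + lam2 *\<^sub>R Lam2)
          \<and> matrix_inv (transpose A ** A + lam2 *\<^sub>R (transpose L2 ** L2)) ** transpose A
              = transpose A ** matrix_inv (A ** transpose A + lam2 *\<^sub>R Lam2)"
proof -
  define K where "K = {x. A *v x = 0}"
  define AT where "AT = transpose A"
  define P where "P = transpose L2 ** L2"
  define G where "G = A ** AT"
  define Lam where "Lam = matrix_inv G ** A ** P ** AT"
  define M where "M = AT ** A + lam2 *\<^sub>R P"
  define N where "N = G + lam2 *\<^sub>R Lam"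
  have injAT: "y = 0" if "AT *v y = 0" for y
  proof -
    have "rank AT = CARD('l)" using full_row_rank rank_transpose AT_def by metis
    thus ?thesis using matrix_nonfull_linear_equations_eq[of AT] that by blast
  qed
  have ATperp: "AT *v y \<in> orthogonal_comp K" for y
    unfolding orthogonal_comp_def orthogonal_def K_def AT_def
    by (auto, metis dot_lmul_matrix inner_commute inner_zero_right)
  have Ginv: "invertible G"
  proof (rule ker_invertible)
    fix y assume "G *v y = 0"
    have "inner (AT *v y) (AT *v y) = inner y (G *v y)"
      unfolding G_def AT_def by (simp only: inner_transp matrix_vector_mul_assoc)
    also have "\<dots> = 0" using \<open>G *v y = 0\<close> by simp
    finally have "AT *v y = 0" by (simp only: inner_eq_zero_iff)
    thus "y = 0" using injAT by simp
  qed
  note G1 = inv_props[OF Ginv]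
  have proj: "AT *v (matrix_inv G *v (A *v z)) = z" if z: "z \<in> orthogonal_comp K" for z
  proof -
    define w where "w = z - AT *v (matrix_inv G *v (A *v z))"
    have "A *v w = A *v z - G *v (matrix_inv G *v (A *v z))"
      unfolding w_def G_def by (simp add: matrix_vector_mult_diff_distrib matrix_vector_mul_assoc matrix_mul_assoc)
    also have "\<dots> = 0" by (simp add: matrix_vector_mul_assoc matrix_mul_assoc G1)
    finally have wK: "w \<in> K" unfolding K_def by simp
    have "w \<in> orthogonal_comp K"
      unfolding w_def using z ATperp subspace_orthogonal_comp subspace_diff by blast
    hence "inner w w = 0" using wK unfolding orthogonal_comp_def orthogonal_def by blast
    thus ?thesis unfolding w_def by simp
  qed
  have ATLam: "AT ** Lam = P ** AT"
  proof (subst matrix_eq, intro allI)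
    fix y
    have "P *v (AT *v y) \<in> orthogonal_comp K"
      using invariant ATperp unfolding P_def K_def by blast
    from proj[OF this] show "(AT ** Lam) *v y = (P ** AT) *v y"
      unfolding Lam_def by (simp add: matrix_vector_mul_assoc matrix_mul_assoc)
  qed
  have MAT: "M ** AT = AT ** N"
    unfolding M_def N_def G_def
    by (simp add: add_rdistrib_mat matrix_add_ldistrib matrix_scalar_ac scalar_matrix_assoc[symmetric]
        ATLam matrix_mul_assoc)
  have Minv: "invertible M"
  proof (rule ker_invertible)
    fix x assume "M *v x = 0"
    hence "inner x (M *v x) = 0" by simp
    moreover have "inner x (M *v x) = inner (A *v x) (A *v x) + lam2 * inner (L2 *v x) (L2 *v x)"
      unfolding M_def P_def AT_def
      by (simp add: matrix_vector_mult_add_rdistrib inner_add_right scaleR_matrix_vector_assoc[symmetric]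
          matrix_vector_mul_assoc[symmetric] inner_transp inner_commute[of x] dot_lmul_matrix)
    ultimately have "inner (A *v x) (A *v x) + lam2 * inner (L2 *v x) (L2 *v x) = 0" by simp
    moreover have "inner (A *v x) (A *v x) \<ge> 0" "inner (L2 *v x) (L2 *v x) \<ge> 0" by auto
    ultimately have "inner (A *v x) (A *v x) = 0" "lam2 * inner (L2 *v x) (L2 *v x) = 0"
      using lam_pos by (smt (verit) mult_nonneg_nonneg)+
    hence "A *v x = 0" "L2 *v x = 0" using lam_pos by auto
    thus "x = 0" using ker_int by blast
  qed
  note M1 = inv_props[OF Minv]
  have Ninv: "invertible N"
  proof (rule ker_invertible)
    fix y assume "N *v y = 0"
    hence "M *v (AT *v y) = 0" by (metis MAT matrix_vector_mul_assoc matrix_vector_mult_0_right)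
    hence "AT *v y = 0" using Minv inj_matrix_vector_mult by (metis matrix_vector_mult_0_right injD)
    thus "y = 0" by (rule injAT)
  qed
  note N1 = inv_props[OF Ninv]
  have "matrix_inv M ** AT = matrix_inv M ** AT ** (N ** matrix_inv N)" by (simp add: N1)
  also have "\<dots> = matrix_inv M ** (M ** AT) ** matrix_inv N" by (simp add: MAT matrix_mul_assoc)
  also have "\<dots> = AT ** matrix_inv N" by (simp add: M1 matrix_mul_assoc)
  finally have "matrix_inv M ** AT = AT ** matrix_inv N" .
  thus ?thesis using Minv Ninv
    unfolding Let_def M_def N_def Lam_def G_def AT_def P_def by (simp add: matrix_mul_assoc)
qed

end
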